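(* Let $G=(V,E)$ be a graph on $V=\{1,\dots,N\}$, let $\mathcal L\subseteq\{1,\dots,N\}$ be a set of lost qubits, let $\rho$ be the post-loss state defined in the context, and let $G'=G[V\setminus\mathcal L]$. Let $r$ be a root of $G$ (a vertex of degree $n_{\max}=n_{\max}(G)$) with $r\notin\mathcal L$. Define $$\mathcal W^{G}=\mathcal N_r^{G}\setminus\bigcup_{l\in\mathcal L}\overline{\mathcal N_l^{G}},\qquad \mathcal T^{G}=\{1,\dots,N\}\setminus\Big(\bigcup_{l\in\mathcal L}\overline{\mathcal N_l^{G}}\cup\overline{\mathcal N_r^{G}}\Big).$$ Then $$\langle I_r^{G*}\rangle_\rho=\langle I_r^{G'*}\rangle_\rho=\begin{cases}\sqrt2\,n_{\max}+\sqrt2\,|\mathcal W^{G}|+|\mathcal T^{G}| & \text{if } \overline{\mathcal N_r^{G}}\cap\mathcal L=\emptyset,\\[2pt] \sqrt2\,|\mathcal W^{G}|+|\mathcal T^{G}| & \text{otherwise.}\end{cases}$$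
   Context: Qubits are labelled $1,\dots,N$; $X_i,Z_i$ denote the Pauli $X$ and $Z$ operators acting on qubit $i$ (identity on all other qubits). For a simple undirected graph $H$ with vertex set $V(H)\subseteq\{1,\dots,N\}$, $\mathcal N_i^H$ is the set of neighbours of $i$ in $H$, $\overline{\mathcal N_i^H}=\mathcal N_i^H\cup\{i\}$, and $n_{\max}(H)$ is the maximum degree of $H$; a root of $H$ is a vertex of degree $n_{\max}(H)$. The stabilizer of vertex $i$ in $H$ is $S_i^H=X_i\prod_{j\in\mathcal N_i^H}Z_j$. For $G=(V,E)$ with $V=\{1,\dots,N\}$, the graph state $|\phi^G\rangle$ is the unique $N$-qubit state with $S_i^G|\phi^G\rangle=|\phi^G\rangle$ for all $i$. For a vertex $r$ of $H$ define the operator $$I_r^{H*}=\sqrt2\,n_{\max}(H)\,S_r^H+\sqrt2\sum_{i\in\mathcal N_r^H}S_i^H+\sum_{i\in V(H)\setminus\overline{\mathcal N_r^H}}S_i^H .$$ For a set $\mathcal L\subseteq\{1,\dots,N\}$ of lost qubits, $G'=G[V\setminus\mathcal L]$ is the induced subgraph on $V\setminus\mathcal L$ (vertices keep their labels; its operators act as identity on qubits in $\mathcal L$), and the post-loss state is the $N$-qubit state $\rho=\mathrm{Tr}_{\mathcal L}\big(|\phi^G\rangle\langle\phi^G|\big)\otimes\bigotimes_{l\in\mathcal L}|0\rangle\langle0|_l$. $\langle A\rangle_\rho=\mathrm{Tr}(A\rho)$. *)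

theory Defs
  imports Complex_Main
begin

(* N-qubit computational basis states are indexed by the set of qubits in state |1>,
   i.e. by subsets of {1..N}.  An N-qubit operator is a matrix indexed by such sets,
   a state vector is a function on such sets (zero outside Pow {1..N}). *)
type_synonym op = "nat set \<Rightarrow> nat set \<Rightarrow> complex"
type_synonym vec = "nat set \<Rightarrow> complex"

definition qbasis :: "nat \<Rightarrow> nat set set" where
  "qbasis N = Pow {1..N}"

definition mmul :: "nat \<Rightarrow> op \<Rightarrow> op \<Rightarrow> op" where
  "mmul N A B = (\<lambda>a b. \<Sum>c\<in>qbasis N. A a c * B c b)"

definition apply_op :: "nat \<Rightarrow> op \<Rightarrow> vec \<Rightarrow> vec" where
  "apply_op N A v = (\<lambda>a. \<Sum>b\<in>qbasis N. A a b * v b)"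

definition op_add :: "op \<Rightarrow> op \<Rightarrow> op" where
  "op_add A B = (\<lambda>a b. A a b + B a b)"

definition op_scale :: "complex \<Rightarrow> op \<Rightarrow> op" where
  "op_scale c A = (\<lambda>a b. c * A a b)"

definition op_sum :: "('i \<Rightarrow> op) \<Rightarrow> 'i set \<Rightarrow> op" where
  "op_sum F I = (\<lambda>a b. \<Sum>i\<in>I. F i a b)"

definition Xop :: "nat \<Rightarrow> op" where
  "Xop i = (\<lambda>a b. if a = (if i \<in> b then b - {i} else insert i b) then 1 else 0)"

definition Zop :: "nat \<Rightarrow> op" where
  "Zop i = (\<lambda>a b. if a = b then (if i \<in> a then -1 else 1) else 0)"

definition Zprod :: "nat set \<Rightarrow> op" where
  "Zprod J = (\<lambda>a b. if a = b then (\<Prod>j\<in>J. Zop j a a) else 0)"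

definition trace_op :: "nat \<Rightarrow> op \<Rightarrow> complex" where
  "trace_op N A = (\<Sum>a\<in>qbasis N. A a a)"

definition expect :: "nat \<Rightarrow> op \<Rightarrow> op \<Rightarrow> complex" where
  "expect N A \<rho> = trace_op N (mmul N A \<rho>)"

(* Graphs: simple undirected graph given by symmetric irreflexive adjacency E;
   a (sub)graph H is the induced graph on vertex set W. *)
definition nbrs :: "(nat \<Rightarrow> nat \<Rightarrow> bool) \<Rightarrow> nat set \<Rightarrow> nat \<Rightarrow> nat set" where
  "nbrs E W i = {j \<in> W. E i j}"

definition cnbrs :: "(nat \<Rightarrow> nat \<Rightarrow> bool) \<Rightarrow> nat set \<Rightarrow> nat \<Rightarrow> nat set" where
  "cnbrs E W i = insert i (nbrs E W i)"

definition nmax :: "(nat \<Rightarrow> nat \<Rightarrow> bool) \<Rightarrow> nat set \<Rightarrow> nat" where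
  "nmax E W = Max ((\<lambda>i. card (nbrs E W i)) ` W)"

definition stab :: "nat \<Rightarrow> (nat \<Rightarrow> nat \<Rightarrow> bool) \<Rightarrow> nat set \<Rightarrow> nat \<Rightarrow> op" where
  "stab N E W i = mmul N (Xop i) (Zprod (nbrs E W i))"

definition Iop :: "nat \<Rightarrow> (nat \<Rightarrow> nat \<Rightarrow> bool) \<Rightarrow> nat set \<Rightarrow> nat \<Rightarrow> op" where
  "Iop N E W r =
     op_add (op_scale (complex_of_real (sqrt 2 * real (nmax E W))) (stab N E W r))
      (op_add (op_scale (complex_of_real (sqrt 2)) (op_sum (stab N E W) (nbrs E W r)))
              (op_sum (stab N E W) (W - cnbrs E W r)))"

definition is_graph_state :: "nat \<Rightarrow> (nat \<Rightarrow> nat \<Rightarrow> bool) \<Rightarrow> vec \<Rightarrow> bool" where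
  "is_graph_state N E \<psi> \<longleftrightarrow>
     (\<forall>a. a \<notin> qbasis N \<longrightarrow> \<psi> a = 0) \<and>
     (\<Sum>a\<in>qbasis N. (cmod (\<psi> a))\<^sup>2) = 1 \<and>
     (\<forall>i\<in>{1..N}. \<forall>a\<in>qbasis N. apply_op N (stab N E {1..N} i) \<psi> a = \<psi> a)"

(* |phi^G><phi^G| (independent of the global phase of the chosen vector) *)
definition graph_dm :: "nat \<Rightarrow> (nat \<Rightarrow> nat \<Rightarrow> bool) \<Rightarrow> op" where
  "graph_dm N E = (let \<psi> = (SOME \<psi>. is_graph_state N E \<psi>) in (\<lambda>a b. \<psi> a * cnj (\<psi> b)))"

(* Tr_L(|phi^G><phi^G|) tensor |0><0| on the qubits in L *)
definition post_loss :: "nat \<Rightarrow> (nat \<Rightarrow> nat \<Rightarrow> bool) \<Rightarrow> nat set \<Rightarrow> op" where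
  "post_loss N E L = (\<lambda>a b. if a \<inter> L = {} \<and> b \<inter> L = {}
       then (\<Sum>c\<in>Pow L. graph_dm N E (a \<union> c) (b \<union> c)) else 0)"

end

theory Submission
  imports Defs
begin


definition flip :: "nat \<Rightarrow> nat set \<Rightarrow> nat set" where
  "flip i b = (if i \<in> b then b - {i} else insert i b)"

definition zs :: "nat set \<Rightarrow> nat set \<Rightarrow> complex" where
  "zs K a = (\<Prod>j\<in>K. if j \<in> a then -1 else 1)"

lemma flip_flip[simp]: "flip i (flip i b) = b"
  by (auto simp: flip_def)

lemma flip_in_qbasis: "i \<in> {1..N} \<Longrightarrow> b \<in> qbasis N \<Longrightarrow> flip i b \<in> qbasis N"
  by (auto simp: flip_def qbasis_def)

lemma finite_qbasis[simp]: "finite (qbasis N)"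
  by (simp add: qbasis_def)

lemma flip_eq_iff: "(a = flip i b) = (b = flip i a)"
  by (metis flip_flip)

lemma Zprod_eq: "Zprod J a b = (if a = b then zs J b else 0)"
  by (simp add: Zprod_def zs_def Zop_def)

lemma stab_eq: "stab N E W i a b = (if b \<in> qbasis N \<and> a = flip i b then zs (nbrs E W i) b else 0)"
proof -
  have "stab N E W i a b = (\<Sum>c\<in>qbasis N. if c = b then Xop i a b * zs (nbrs E W i) b else 0)"
    unfolding stab_def mmul_def Zprod_eq by (intro sum.cong) auto
  also have "... = (if b \<in> qbasis N then Xop i a b * zs (nbrs E W i) b else 0)"
    by (simp add: sum.delta')
  finally show ?thesis by (simp add: Xop_def flip_def)
qed

lemma zs_sq: "zs K a * zs K a = 1"
  unfolding zs_def prod.distrib[symmetric] by (rule prod.neutral) auto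

lemma cnj_zs[simp]: "cnj (zs K a) = zs K a"
  unfolding zs_def cnj_prod by (intro prod.cong) auto

lemma zs_flip_notin: "i \<notin> K \<Longrightarrow> zs K (flip i a) = zs K a"
  unfolding zs_def by (intro prod.cong) (auto simp: flip_def)

lemma zs_insert_notin: "i \<notin> K \<Longrightarrow> zs K (insert i a) = zs K a"
  unfolding zs_def by (intro prod.cong) auto

lemma zs_flip_in: assumes "finite K" "l \<in> K" shows "zs K (flip l a) = - zs K a"
proof -
  have "zs K (flip l a) = (if l \<in> flip l a then -1 else 1) * zs (K - {l}) (flip l a)"
    unfolding zs_def using assms by (simp add: prod.remove)
  also have "zs (K - {l}) (flip l a) = zs (K - {l}) a" by (simp add: zs_flip_notin)
  also have "zs K a = (if l \<in> a then -1 else 1) * zs (K - {l}) a"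
    unfolding zs_def using assms by (simp add: prod.remove)
  ultimately show ?thesis by (auto simp: flip_def)
qed

lemma zs_minus: assumes "finite K" shows "zs K (a - L) = zs (K - L) a"
  unfolding zs_def using assms by (intro prod.mono_neutral_cong_right) auto

lemma zs_split: assumes "finite K" shows "zs K a = zs (K \<inter> L) a * zs (K - L) a"
  unfolding zs_def using assms by (rule prod.Int_Diff)

lemma expect_add: "expect N (op_add A B) \<rho> = expect N A \<rho> + expect N B \<rho>"
  unfolding expect_def trace_op_def mmul_def op_add_def
  by (simp add: distrib_right sum.distrib)

lemma expect_scale: "expect N (op_scale c A) \<rho> = c * expect N A \<rho>"
  unfolding expect_def trace_op_def mmul_def op_scale_def
  by (simp add: sum_distrib_left mult.assoc)

lemma expect_sum: "expect N (op_sum F I) \<rho> = (\<Sum>i\<in>I. expect N (F i) \<rho>)"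
  unfolding expect_def trace_op_def mmul_def op_sum_def
  by (simp add: sum_distrib_right sum.swap[of _ I])


lemma expect_stab_raw:
  assumes i: "i \<in> {1..N}"
  shows "expect N (stab N E W i) \<rho> = (\<Sum>c\<in>qbasis N. zs (nbrs E W i) c * \<rho> c (flip i c))"
proof -
  have "expect N (stab N E W i) \<rho> =
    (\<Sum>a\<in>qbasis N. \<Sum>c\<in>qbasis N. if a = flip i c then zs (nbrs E W i) c * \<rho> c a else 0)"
    unfolding expect_def trace_op_def mmul_def stab_eq by (intro sum.cong) auto
  also have "... = (\<Sum>c\<in>qbasis N. \<Sum>a\<in>qbasis N. if a = flip i c then zs (nbrs E W i) c * \<rho> c a else 0)"
    by (rule sum.swap)
  also have "... = (\<Sum>c\<in>qbasis N. zs (nbrs E W i) c * \<rho> c (flip i c))"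
    using flip_in_qbasis[OF i] by (intro sum.cong) (auto simp: sum.delta')
  finally show ?thesis .
qed

lemma finite_nbrs[simp]: "finite (nbrs E {1..N} i)"
  unfolding nbrs_def by simp

lemma expect_stab_loss:
  assumes i: "i \<in> {1..N}" and L: "L \<subseteq> {1..N}" and K: "finite (nbrs E W i)"
  shows "expect N (stab N E W i) (post_loss N E L) =
    (if i \<in> L then 0 else (\<Sum>a\<in>qbasis N. zs (nbrs E W i - L) a * graph_dm N E a (flip i a)))"
proof (cases "i \<in> L")
  case True
  have "\<And>c. post_loss N E L c (flip i c) = 0"
    using True unfolding post_loss_def flip_def by auto
  then show ?thesis using True by (simp add: expect_stab_raw[OF i])
next
  case False
  let ?K = "nbrs E W i"
  let ?S = "Sigma {c\<in>qbasis N. c \<inter> L = {}} (\<lambda>_. Pow L)"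
  have fl: "\<And>c. flip i c \<inter> L = c \<inter> L" using False by (auto simp: flip_def)
  have "expect N (stab N E W i) (post_loss N E L) =
     (\<Sum>c\<in>qbasis N. if c \<inter> L = {} then (\<Sum>e\<in>Pow L. zs ?K c * graph_dm N E (c \<union> e) (flip i c \<union> e)) else 0)"
    unfolding expect_stab_raw[OF i] post_loss_def fl
    by (intro sum.cong) (auto simp: sum_distrib_left)
  also have "... = (\<Sum>c\<in>{c\<in>qbasis N. c \<inter> L = {}}. \<Sum>e\<in>Pow L. zs ?K c * graph_dm N E (c \<union> e) (flip i c \<union> e))"
    by (simp add: sum.inter_filter)
  also have "... = (\<Sum>(c,e)\<in>?S. zs ?K c * graph_dm N E (c \<union> e) (flip i c \<union> e))"
    by (subst sum.Sigma) (auto intro: finite_subset[OF L])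
  also have "... = (\<Sum>a\<in>qbasis N. zs ?K (a - L) * graph_dm N E a (flip i a))"
    apply (rule sum.reindex_bij_witness[of _ "\<lambda>a. (a - L, a \<inter> L)" "\<lambda>(c,e). c \<union> e"])
    subgoal by auto
    subgoal using L by (auto simp: qbasis_def)
    subgoal by auto
    subgoal by (auto simp: qbasis_def)
    subgoal for a
    proof -
      assume "a \<in> ?S"
      then obtain c e where a: "a = (c, e)" "c \<inter> L = {}" "e \<subseteq> L" by auto
      then have "(c \<union> e) - L = c" by auto
      moreover have "flip i (c \<union> e) = flip i c \<union> e" using a False by (auto simp: flip_def)
      ultimately show ?thesis using a by simp
    qed
    done
  also have "... = (\<Sum>a\<in>qbasis N. zs (?K - L) a * graph_dm N E a (flip i a))"
    using K by (simp add: zs_minus)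
  finally show ?thesis using False by simp
qed


lemma psi_flip:
  assumes gs: "is_graph_state N E \<psi>" and i: "i \<in> {1..N}" and a: "a \<in> qbasis N"
  shows "\<psi> (flip i a) = zs (nbrs E {1..N} i) a * \<psi> a"
proof -
  let ?a = "flip i a"
  have a': "?a \<in> qbasis N" using flip_in_qbasis[OF i a] .
  have "\<psi> ?a = apply_op N (stab N E {1..N} i) \<psi> ?a"
    using gs i a' unfolding is_graph_state_def by auto
  also have "... = (\<Sum>b\<in>qbasis N. if b = a then zs (nbrs E {1..N} i) b * \<psi> b else 0)"
    unfolding apply_op_def stab_eq by (intro sum.cong) (auto simp: flip_eq_iff[of "flip i a"])
  also have "... = zs (nbrs E {1..N} i) a * \<psi> a" using a by (simp add: sum.delta')
  finally show ?thesis .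
qed

lemma G_val:
  assumes gs: "is_graph_state N E \<psi>" and M: "M \<subseteq> {1..N}"
  shows "(\<Sum>a\<in>qbasis N. zs M a * (\<psi> a * cnj (\<psi> a))) = (if M = {} then 1 else 0)"
proof (cases "M = {}")
  case True
  have "(\<Sum>a\<in>qbasis N. \<psi> a * cnj (\<psi> a)) = (\<Sum>a\<in>qbasis N. complex_of_real ((cmod (\<psi> a))\<^sup>2))"
    by (intro sum.cong refl) (simp only: complex_norm_square)
  also have "... = complex_of_real (\<Sum>a\<in>qbasis N. (cmod (\<psi> a))\<^sup>2)"
    by (rule of_real_sum[symmetric])
  also have "... = 1" using gs unfolding is_graph_state_def by simp
  finally show ?thesis using True by (simp add: zs_def)
next
  case False
  then obtain l where l: "l \<in> M" by auto
  have fM: "finite M" using M finite_subset by blast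
  have lV: "l \<in> {1..N}" using l M by auto
  let ?S = "(\<Sum>a\<in>qbasis N. zs M a * (\<psi> a * cnj (\<psi> a)))"
  have "?S = (\<Sum>a\<in>qbasis N. zs M (flip l a) * (\<psi> (flip l a) * cnj (\<psi> (flip l a))))"
    apply (rule sum.reindex_bij_witness[of _ "flip l" "flip l"])
    using flip_in_qbasis[OF lV] by auto
  also have "... = (\<Sum>a\<in>qbasis N. - (zs M a * (\<psi> a * cnj (\<psi> a))))"
  proof (intro sum.cong refl)
    fix a assume a: "a \<in> qbasis N"
    let ?z = "zs (nbrs E {1..N} l) a"
    have "zs M (flip l a) * (\<psi> (flip l a) * cnj (\<psi> (flip l a)))
        = - zs M a * ((?z * ?z) * (\<psi> a * cnj (\<psi> a)))"
      by (simp add: zs_flip_in[OF fM l] psi_flip[OF gs lV a] mult_ac)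
    then show "zs M (flip l a) * (\<psi> (flip l a) * cnj (\<psi> (flip l a))) = - (zs M a * (\<psi> a * cnj (\<psi> a)))"
      by (simp add: zs_sq)
  qed
  also have "... = - ?S" by (simp add: sum_negf)
  finally have "?S = 0" by simp
  then show ?thesis using False by simp
qed

lemma expect_stab_gs:
  assumes gs: "is_graph_state N E \<psi>" and dm: "\<And>a b. graph_dm N E a b = \<psi> a * cnj (\<psi> b)"
    and i: "i \<in> {1..N}" and L: "L \<subseteq> {1..N}" and K: "finite (nbrs E W i)"
    and KL: "nbrs E W i - L = nbrs E {1..N} i - L"
  shows "expect N (stab N E W i) (post_loss N E L) =
     (if i \<notin> L \<and> nbrs E {1..N} i \<inter> L = {} then 1 else 0)"
proof (cases "i \<in> L")
  case True then show ?thesis by (simp add: expect_stab_loss[OF i L K])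
next
  case False
  let ?N = "nbrs E {1..N} i"
  have "expect N (stab N E W i) (post_loss N E L) =
     (\<Sum>a\<in>qbasis N. zs (?N - L) a * (\<psi> a * cnj (\<psi> (flip i a))))"
    using False by (simp add: expect_stab_loss[OF i L K] KL dm)
  also have "... = (\<Sum>a\<in>qbasis N. zs (?N \<inter> L) a * (\<psi> a * cnj (\<psi> a)))"
  proof (intro sum.cong refl)
    fix a assume a: "a \<in> qbasis N"
    have e1: "\<psi> a * cnj (\<psi> (flip i a)) = zs ?N a * (\<psi> a * cnj (\<psi> a))"
      by (simp add: psi_flip[OF gs i a])
    have s: "zs ?N a = zs (?N \<inter> L) a * zs (?N - L) a" by (rule zs_split) (simp add: nbrs_def)
    have "zs (?N - L) a * (\<psi> a * cnj (\<psi> (flip i a))) =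
        (zs (?N - L) a * zs (?N - L) a) * zs (?N \<inter> L) a * (\<psi> a * cnj (\<psi> a))"
      unfolding e1 s by (simp only: mult_ac)
    then show "zs (?N - L) a * (\<psi> a * cnj (\<psi> (flip i a))) = zs (?N \<inter> L) a * (\<psi> a * cnj (\<psi> a))"
      by (simp only: zs_sq mult_1)
  qed
  also have "... = (if ?N \<inter> L = {} then 1 else 0)"
    by (rule G_val[OF gs]) (auto simp: nbrs_def)
  finally show ?thesis using False by simp
qed


definition fsgn :: "(nat \<Rightarrow> nat \<Rightarrow> bool) \<Rightarrow> nat set \<Rightarrow> complex" where
  "fsgn E a = (\<Prod>x\<in>a. \<Prod>y\<in>a. if E x y \<and> x < y then -1 else 1)"

definition psi0 :: "nat \<Rightarrow> (nat \<Rightarrow> nat \<Rightarrow> bool) \<Rightarrow> vec" where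
  "psi0 N E a = (if a \<in> qbasis N then fsgn E a * complex_of_real (1 / sqrt (2 ^ N)) else 0)"

lemma cmod_fsgn: "cmod (fsgn E a) = 1"
  unfolding fsgn_def prod_norm[symmetric] by (intro prod.neutral ballI) (simp add: prod_norm[symmetric])

lemma fsgn_insert:
  assumes sym: "\<And>i j. E i j \<longleftrightarrow> E j i" and fa: "finite a" and k: "k \<notin> a" and aV: "a \<subseteq> V" and fV: "finite V"
  shows "fsgn E (insert k a) = fsgn E a * zs (nbrs E V k) a"
proof -
  let ?t = "\<lambda>x y. if E x y \<and> x < y then -1 else (1::complex)"
  have "fsgn E (insert k a) = (\<Prod>y\<in>insert k a. ?t k y) * (\<Prod>x\<in>a. \<Prod>y\<in>insert k a. ?t x y)"
    unfolding fsgn_def using fa k by simp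
  also have "... = ((\<Prod>y\<in>a. ?t k y) * (\<Prod>x\<in>a. ?t x k)) * fsgn E a"
    unfolding fsgn_def using fa k by (simp add: prod.distrib mult_ac)
  also have "(\<Prod>y\<in>a. ?t k y) * (\<Prod>x\<in>a. ?t x k) = (\<Prod>y\<in>a. if E k y then -1 else 1)"
    unfolding prod.distrib[symmetric]
  proof (intro prod.cong refl)
    fix y assume "y \<in> a"
    then have "y \<noteq> k" using k by auto
    then show "?t k y * ?t y k = (if E k y then -1 else 1)" using sym[of k y] by auto
  qed
  also have "... = (\<Prod>y\<in>{y\<in>a. E k y}. -1)"
    using fa by (simp only: prod.inter_filter)
  also have "{y\<in>a. E k y} = {j \<in> nbrs E V k. j \<in> a}" using aV by (auto simp: nbrs_def)
  also have "(\<Prod>y\<in>{j \<in> nbrs E V k. j \<in> a}. -1) = zs (nbrs E V k) a"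
    unfolding zs_def using fV
    by (subst prod.inter_filter) (auto simp: nbrs_def)
  finally show ?thesis by simp
qed

lemma graph_state_exists:
  assumes sym: "\<And>i j. E i j \<longleftrightarrow> E j i" and irrefl: "\<And>i. \<not> E i i"
  shows "is_graph_state N E (psi0 N E)"
  unfolding is_graph_state_def
proof (intro conjI ballI allI impI)
  fix a assume "a \<notin> qbasis N" then show "psi0 N E a = 0" by (simp add: psi0_def)
next
  have "(\<Sum>a\<in>qbasis N. (cmod (psi0 N E a))\<^sup>2) = (\<Sum>a\<in>qbasis N. 1 / 2 ^ N)"
    by (intro sum.cong refl) (simp add: psi0_def norm_mult norm_divide cmod_fsgn power_divide)
  also have "... = 1" by (simp add: qbasis_def card_Pow)
  finally show "(\<Sum>a\<in>qbasis N. (cmod (psi0 N E a))\<^sup>2) = 1" .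
next
  fix i a assume i: "i \<in> {1..N}" and a: "a \<in> qbasis N"
  let ?V = "{1..N}"
  let ?z = "zs (nbrs E ?V i)"
  have iN: "i \<notin> nbrs E ?V i" using irrefl by (simp add: nbrs_def)
  have fa': "flip i a \<in> qbasis N" using flip_in_qbasis[OF i a] .
  have "apply_op N (stab N E ?V i) (psi0 N E) a =
     (\<Sum>b\<in>qbasis N. if b = flip i a then ?z b * psi0 N E b else 0)"
    unfolding apply_op_def stab_eq by (intro sum.cong) (auto simp: flip_eq_iff[of a])
  also have "... = ?z (flip i a) * psi0 N E (flip i a)" using fa' by (simp add: sum.delta')
  also have "... = psi0 N E a"
  proof -
    have key: "?z (flip i a) * fsgn E (flip i a) = fsgn E a"
    proof (cases "i \<in> a")
      case True
      let ?a0 = "a - {i}"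
      have a0: "a = insert i ?a0" "i \<notin> ?a0" "finite ?a0" "?a0 \<subseteq> ?V"
        using True a by (auto simp: qbasis_def intro: finite_subset)
      have "fsgn E a = fsgn E ?a0 * ?z ?a0" by (subst a0(1), rule fsgn_insert[OF sym a0(3) a0(2) a0(4)], simp)
      moreover have "flip i a = ?a0" using True by (simp add: flip_def)
      ultimately show ?thesis by (simp add: mult.commute)
    next
      case False
      have fa: "finite a" "a \<subseteq> ?V" using a by (auto simp: qbasis_def intro: finite_subset)
      have "fsgn E (insert i a) = fsgn E a * ?z a" by (rule fsgn_insert[OF sym fa(1) False fa(2)]) simp
      moreover have "flip i a = insert i a" using False by (simp add: flip_def)
      moreover have "?z (insert i a) = ?z a" using iN by (simp add: zs_insert_notin)
      ultimately show ?thesis by (simp add: mult_ac zs_sq)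
    qed
    show ?thesis using a fa' key by (simp add: psi0_def mult.assoc[symmetric])
  qed
  finally show "apply_op N (stab N E ?V i) (psi0 N E) a = psi0 N E a" .
qed


lemma expect_Iop: "expect N (Iop N E W r) \<rho> =
   complex_of_real (sqrt 2 * real (nmax E W)) * expect N (stab N E W r) \<rho>
   + complex_of_real (sqrt 2) * (\<Sum>i\<in>nbrs E W r. expect N (stab N E W i) \<rho>)
   + (\<Sum>i\<in>W - cnbrs E W r. expect N (stab N E W i) \<rho>)"
  unfolding Iop_def expect_add expect_scale expect_sum by (simp add: add.assoc)

lemma sum_ind: "finite A \<Longrightarrow> (\<Sum>i\<in>A. if g i then 1 else 0) = (of_nat (card {i\<in>A. g i}) :: complex)"
  by (simp flip: sum.inter_filter)

theorem theorem1:
  fixes N :: nat and E :: "nat \<Rightarrow> nat \<Rightarrow> bool" and L :: "nat set" and r :: nat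
  assumes sym: "\<And>i j. E i j \<longleftrightarrow> E j i"
    and irrefl: "\<And>i. \<not> E i i"
    and L_sub: "L \<subseteq> {1..N}"
    and r_in: "r \<in> {1..N}"
    and r_root: "card (nbrs E {1..N} r) = nmax E {1..N}"
    and r_notin: "r \<notin> L"
  defines "V \<equiv> {1..N}"
    and "W \<equiv> nbrs E {1..N} r - (\<Union>l\<in>L. cnbrs E {1..N} l)"
    and "T \<equiv> {1..N} - ((\<Union>l\<in>L. cnbrs E {1..N} l) \<union> cnbrs E {1..N} r)"
  shows "expect N (Iop N E V r) (post_loss N E L) = expect N (Iop N E (V - L) r) (post_loss N E L)
    \<and> expect N (Iop N E V r) (post_loss N E L) =
        complex_of_real
          (if cnbrs E V r \<inter> L = {}
           then sqrt 2 * real (nmax E V) + sqrt 2 * real (card W) + real (card T)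
           else sqrt 2 * real (card W) + real (card T))"
proof -
  define \<psi> where "\<psi> = (SOME \<psi>. is_graph_state N E \<psi>)"
  have ex: "is_graph_state N E (psi0 N E)"
    by (rule graph_state_exists[of E]) (rule sym, rule irrefl)
  have gs: "is_graph_state N E \<psi>"
    unfolding \<psi>_def using ex by (rule someI[of "is_graph_state N E"])
  have dm: "\<And>a b. graph_dm N E a b = \<psi> a * cnj (\<psi> b)"
    unfolding graph_dm_def \<psi>_def Let_def by simp
  define \<rho> where "\<rho> = post_loss N E L"
  define g where "g i = (i \<notin> L \<and> nbrs E V i \<inter> L = {})" for i
  have LV: "L \<subseteq> V" using L_sub V_def by simp
  have fV: "finite V" using V_def by simp
  have ESV: "expect N (stab N E V i) \<rho> = (if g i then 1 else 0)" if "i \<in> V" for i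
    unfolding \<rho>_def g_def V_def
    by (rule expect_stab_gs[OF gs dm]) (use that L_sub V_def in \<open>auto simp: nbrs_def\<close>)
  have ESVL: "expect N (stab N E (V - L) i) \<rho> = (if g i then 1 else 0)" if "i \<in> V - L" for i
    unfolding \<rho>_def g_def V_def
    by (rule expect_stab_gs[OF gs dm]) (use that L_sub V_def in \<open>auto simp: nbrs_def\<close>)
  have nbV: "nbrs E V r \<subseteq> V" "nbrs E (V - L) r \<subseteq> V - L" by (auto simp: nbrs_def)
  have rV: "r \<in> V" using r_in V_def by simp
  have SW: "{i \<in> nbrs E V r. g i} = W" "{i \<in> nbrs E (V - L) r. g i} = W"
    unfolding W_def g_def V_def nbrs_def cnbrs_def using L_sub sym by auto (use L_sub in fastforce)+
  have ST: "{i \<in> V - cnbrs E V r. g i} = T" "{i \<in> (V - L) - cnbrs E (V - L) r. g i} = T"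
    unfolding T_def g_def V_def nbrs_def cnbrs_def using L_sub sym by auto (use L_sub in fastforce)+
  have gr: "g r \<longleftrightarrow> cnbrs E V r \<inter> L = {}"
    unfolding g_def cnbrs_def using r_notin by auto
  have nm: "nmax E (V - L) = nmax E V" if "g r"
  proof -
    have eq: "nbrs E (V - L) r = nbrs E V r" using that unfolding g_def nbrs_def by auto
    have fin: "finite ((\<lambda>i. card (nbrs E V i)) ` V)" using fV by simp
    show ?thesis unfolding nmax_def
    proof (rule Max_eqI)
      show "finite ((\<lambda>i. card (nbrs E (V - L) i)) ` (V - L))" using fV by simp
    next
      fix y assume "y \<in> (\<lambda>i. card (nbrs E (V - L) i)) ` (V - L)"
      then obtain i where i: "i \<in> V - L" "y = card (nbrs E (V - L) i)" by auto
      have "y \<le> card (nbrs E V i)" using i fV by (auto intro!: card_mono simp: nbrs_def)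
      also have "... \<le> Max ((\<lambda>i. card (nbrs E V i)) ` V)" using i fin by (auto intro!: Max_ge)
      finally show "y \<le> Max ((\<lambda>i. card (nbrs E V i)) ` V)" .
    next
      have "Max ((\<lambda>i. card (nbrs E V i)) ` V) = card (nbrs E (V - L) r)"
        using r_root eq V_def by (simp add: nmax_def)
      then show "Max ((\<lambda>i. card (nbrs E V i)) ` V) \<in> (\<lambda>i. card (nbrs E (V - L) i)) ` (V - L)"
        using rV r_notin by auto
    qed
  qed
  let ?c = "complex_of_real (sqrt 2) * of_nat (card W) + of_nat (card T)"
  have EV: "expect N (Iop N E V r) \<rho> =
      complex_of_real (sqrt 2 * real (nmax E V)) * (if g r then 1 else 0) + ?c"
  proof -
    have "(\<Sum>i\<in>nbrs E V r. expect N (stab N E V i) \<rho>) = (\<Sum>i\<in>nbrs E V r. if g i then 1 else 0)"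
      using nbV by (intro sum.cong refl ESV) auto
    also have "... = of_nat (card W)" using fV nbV SW by (simp add: sum_ind finite_subset)
    finally have 1: "(\<Sum>i\<in>nbrs E V r. expect N (stab N E V i) \<rho>) = of_nat (card W)" .
    have "(\<Sum>i\<in>V - cnbrs E V r. expect N (stab N E V i) \<rho>) = (\<Sum>i\<in>V - cnbrs E V r. if g i then 1 else 0)"
      by (intro sum.cong refl ESV) auto
    also have "... = of_nat (card T)" using fV ST by (simp add: sum_ind)
    finally have 2: "(\<Sum>i\<in>V - cnbrs E V r. expect N (stab N E V i) \<rho>) = of_nat (card T)" .
    show ?thesis unfolding expect_Iop 1 2 ESV[OF rV] by (simp add: add.assoc)
  qed
  have EVL: "expect N (Iop N E (V - L) r) \<rho> =
      complex_of_real (sqrt 2 * real (nmax E (V - L))) * (if g r then 1 else 0) + ?c"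
  proof -
    have "(\<Sum>i\<in>nbrs E (V - L) r. expect N (stab N E (V - L) i) \<rho>) = (\<Sum>i\<in>nbrs E (V - L) r. if g i then 1 else 0)"
      using nbV by (intro sum.cong refl ESVL) auto
    also have "... = of_nat (card W)" using fV nbV SW by (simp add: sum_ind finite_subset)
    finally have 1: "(\<Sum>i\<in>nbrs E (V - L) r. expect N (stab N E (V - L) i) \<rho>) = of_nat (card W)" .
    have "(\<Sum>i\<in>(V - L) - cnbrs E (V - L) r. expect N (stab N E (V - L) i) \<rho>) = (\<Sum>i\<in>(V - L) - cnbrs E (V - L) r. if g i then 1 else 0)"
      by (intro sum.cong refl ESVL) auto
    also have "... = of_nat (card T)" using fV ST by (simp add: sum_ind)
    finally have 2: "(\<Sum>i\<in>(V - L) - cnbrs E (V - L) r. expect N (stab N E (V - L) i) \<rho>) = of_nat (card T)" .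
    show ?thesis unfolding expect_Iop 1 2 ESVL[OF DiffI[OF rV r_notin]] by (simp add: add.assoc)
  qed
  show ?thesis
    unfolding \<rho>_def[symmetric] EV EVL using nm gr by (auto simp: add.assoc)
qed

end
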